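(* Let $G=(V,E)$ be a simple graph with $n$ vertices. Then, as polynomials in $\lambda$, $$P(\mathcal{H}_{\bullet G},\lambda)=\lambda(\lambda-1)^n\, I\!\left(G,\tfrac{1}{\lambda-1}\right).$$
   Context: A hypergraph $\mathcal{H}=(\mathcal{V},\mathcal{E})$ consists of a finite vertex set $\mathcal{V}$ and a set $\mathcal{E}$ of subsets of $\mathcal{V}$, each of size at least $1$, called edges. For a positive integer $\lambda$, a weak proper $\lambda$-colouring of $\mathcal{H}$ is a map $\phi:\mathcal{V}\to\{1,\dots,\lambda\}$ such that $|\{\phi(v):v\in e\}|>1$ for every $e\in\mathcal{E}$. $P(\mathcal{H},\lambda)$ denotes the number of weak proper $\lambda$-colourings of $\mathcal{H}$; it is a polynomial in $\lambda$ of degree $|\mathcal{V}|$ (the chromatic polynomial of $\mathcal{H}$), and is regarded as a polynomial for all real or complex $\lambda$. For a simple graph $G=(V,E)$, $\mathcal{H}_{\bullet G}$ is the hypergraph with vertex set $V\cup\{w\}$, where $w\notin V$ is a new vertex, and edge set $\{\{u,v,w\}: uv\in E\}$. The independence polynomial of $G$ is $I(G,x)=\sum_A x^{|A|}$, the sum over all independent sets $A$ of $G$ (including the empty set). *)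

theory Defs
  imports "HOL-Library.FuncSet" "HOL-Computational_Algebra.Polynomial"
begin

type_synonym 'v hypergraph = "'v set \<times> 'v set set"

definition is_hypergraph :: "'v hypergraph \<Rightarrow> bool" where
  "is_hypergraph H \<longleftrightarrow> finite (fst H) \<and>
     (\<forall>e\<in>snd H. e \<subseteq> fst H \<and> card e \<ge> 1)"

definition weak_proper_colourings :: "'v hypergraph \<Rightarrow> nat \<Rightarrow> ('v \<Rightarrow> nat) set" where
  "weak_proper_colourings H k =
     {\<phi> \<in> fst H \<rightarrow>\<^sub>E {1..k}. \<forall>e\<in>snd H. card (\<phi> ` e) > 1}"

definition num_colourings :: "'v hypergraph \<Rightarrow> nat \<Rightarrow> nat" where
  "num_colourings H k = card (weak_proper_colourings H k)"

definition chrom_poly :: "'v hypergraph \<Rightarrow> complex poly" where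
  "chrom_poly H = (THE p. \<forall>k::nat. poly p (of_nat k) = of_nat (num_colourings H k))"

definition simple_graph :: "'a set \<Rightarrow> 'a set set \<Rightarrow> bool" where
  "simple_graph V E \<longleftrightarrow> finite V \<and> (\<forall>e\<in>E. e \<subseteq> V \<and> card e = 2)"

definition independent_sets :: "'a set \<Rightarrow> 'a set set \<Rightarrow> 'a set set" where
  "independent_sets V E = {A. A \<subseteq> V \<and> (\<forall>u\<in>A. \<forall>v\<in>A. {u, v} \<notin> E)}"

definition indep_poly :: "'a set \<Rightarrow> 'a set set \<Rightarrow> 'b::comm_ring_1 \<Rightarrow> 'b" where
  "indep_poly V E x = (\<Sum>A\<in>independent_sets V E. x ^ card A)"

text \<open>The hypergraph H_{\<bullet>G}: new vertex None, edges {u,v,w} for uv in E.\<close>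

definition cone_hypergraph :: "'a set \<Rightarrow> 'a set set \<Rightarrow> 'a option hypergraph" where
  "cone_hypergraph V E = (insert None (Some ` V), {insert None (Some ` e) | e. e \<in> E})"

end

theory Submission
  imports Defs
begin

lemma card_img_gt1:
  assumes "finite e" "e \<noteq> {}"
  shows "card (\<phi> ` insert None (Some ` e)) > 1 \<longleftrightarrow> (\<exists>v\<in>e. \<phi> (Some v) \<noteq> \<phi> None)"
proof
  assume h: "card (\<phi> ` insert None (Some ` e)) > 1"
  show "\<exists>v\<in>e. \<phi> (Some v) \<noteq> \<phi> None"
  proof (rule ccontr)
    assume "\<not> ?thesis"
    then have eq: "\<phi> ` insert None (Some ` e) = {\<phi> None}" by auto
    show False using h unfolding eq by simp
  qed
next
  assume "\<exists>v\<in>e. \<phi> (Some v) \<noteq> \<phi> None"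
  then obtain v where v: "v \<in> e" "\<phi> (Some v) \<noteq> \<phi> None" by blast
  have "{\<phi> None, \<phi> (Some v)} \<subseteq> \<phi> ` insert None (Some ` e)" using v by auto
  moreover have "finite (\<phi> ` insert None (Some ` e))" using assms by simp
  ultimately have "card {\<phi> None, \<phi> (Some v)} \<le> card (\<phi> ` insert None (Some ` e))"
    by (rule card_mono[rotated])
  with v show "card (\<phi> ` insert None (Some ` e)) > 1" by simp
qed

lemma step1:
  assumes sg: "simple_graph V E"
  shows "num_colourings (cone_hypergraph V E) k =
    (\<Sum>c\<in>{1..k}. card {\<psi> \<in> V \<rightarrow>\<^sub>E {1..k}. \<forall>e\<in>E. \<exists>v\<in>e. \<psi> v \<noteq> c})"
proof -
  have fV: "finite V" using sg by (simp add: simple_graph_def)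
  have eE: "\<And>e. e \<in> E \<Longrightarrow> finite e \<and> e \<noteq> {}"
    using sg unfolding simple_graph_def by (metis card.infinite card_0_eq zero_neq_numeral)
  define W where "W = weak_proper_colourings (cone_hypergraph V E) k"
  define T where "T c = {\<psi> \<in> V \<rightarrow>\<^sub>E {1..k}. \<forall>e\<in>E. \<exists>v\<in>e. \<psi> v \<noteq> c}" for c
  have memW: "\<phi> \<in> W \<longleftrightarrow> \<phi> \<in> insert None (Some ` V) \<rightarrow>\<^sub>E {1..k} \<and>
       (\<forall>e\<in>E. \<exists>v\<in>e. \<phi> (Some v) \<noteq> \<phi> None)" for \<phi>
  proof -
    have "(\<forall>e\<in>snd (cone_hypergraph V E). card (\<phi> ` e) > 1) \<longleftrightarrow>
          (\<forall>e\<in>E. card (\<phi> ` insert None (Some ` e)) > 1)"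
      unfolding cone_hypergraph_def snd_conv
    proof (intro iffI ballI)
      fix e assume "\<forall>e\<in>{insert None (Some ` e) |e. e \<in> E}. 1 < card (\<phi> ` e)" "e \<in> E"
      then show "1 < card (\<phi> ` insert None (Some ` e))" by blast
    next
      fix e assume "\<forall>e\<in>E. 1 < card (\<phi> ` insert None (Some ` e))" "e \<in> {insert None (Some ` e) |e. e \<in> E}"
      then show "1 < card (\<phi> ` e)" by blast
    qed
    also have "\<dots> \<longleftrightarrow> (\<forall>e\<in>E. \<exists>v\<in>e. \<phi> (Some v) \<noteq> \<phi> None)"
      by (intro ball_cong refl card_img_gt1) (use eE in auto)
    finally show ?thesis
      unfolding W_def weak_proper_colourings_def by (simp add: cone_hypergraph_def)
  qed
  have finW: "finite W"
  proof -
    have "W \<subseteq> insert None (Some ` V) \<rightarrow>\<^sub>E {1..k}" using memW by auto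
    moreover have "finite (insert None (Some ` V) \<rightarrow>\<^sub>E {1..k::nat})" using fV
      by (intro finite_PiE) auto
    ultimately show ?thesis by (rule finite_subset)
  qed
  have Wun: "W = (\<Union>c\<in>{1..k}. {\<phi>\<in>W. \<phi> None = c})"
    using memW by (auto simp: PiE_iff)
  have "card W = (\<Sum>c\<in>{1..k}. card {\<phi>\<in>W. \<phi> None = c})"
  proof -
    have "card (\<Union>c\<in>{1..k}. {\<phi>\<in>W. \<phi> None = c}) = (\<Sum>c\<in>{1..k}. card {\<phi>\<in>W. \<phi> None = c})"
      by (rule card_UN_disjoint) (use finW in auto)
    with Wun show ?thesis by simp
  qed
  also have "\<dots> = (\<Sum>c\<in>{1..k}. card (T c))"
  proof (rule sum.cong[OF refl])
    fix c assume c: "c \<in> {1..k}"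
    have "bij_betw (\<lambda>\<phi>. \<phi> \<circ> Some) {\<phi>\<in>W. \<phi> None = c} (T c)"
    proof (rule bij_betw_byWitness[where f'="\<lambda>\<psi> x. case x of None \<Rightarrow> c | Some v \<Rightarrow> \<psi> v"])
      show "\<forall>a\<in>{\<phi> \<in> W. \<phi> None = c}. (\<lambda>x. case x of None \<Rightarrow> c | Some v \<Rightarrow> (a \<circ> Some) v) = a"
        proof
        fix a assume "a \<in> {\<phi> \<in> W. \<phi> None = c}"
        then show "(\<lambda>x. case x of None \<Rightarrow> c | Some v \<Rightarrow> (a \<circ> Some) v) = a"
          by (intro ext) (simp split: option.split)
      qed
      show "\<forall>a'\<in>T c. (\<lambda>x. case x of None \<Rightarrow> c | Some v \<Rightarrow> a' v) \<circ> Some = a'"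
        by auto
      show "(\<lambda>\<phi>. \<phi> \<circ> Some) ` {\<phi> \<in> W. \<phi> None = c} \<subseteq> T c"
        proof
        fix \<psi> assume "\<psi> \<in> (\<lambda>\<phi>. \<phi> \<circ> Some) ` {\<phi> \<in> W. \<phi> None = c}"
        then obtain \<phi> where p: "\<phi> \<in> W" "\<phi> None = c" and ps: "\<psi> = \<phi> \<circ> Some" by blast
        from p memW have pe: "\<phi> \<in> insert None (Some ` V) \<rightarrow>\<^sub>E {1..k}"
          and pc: "\<forall>e\<in>E. \<exists>v\<in>e. \<phi> (Some v) \<noteq> \<phi> None" by auto
        have "\<psi> \<in> V \<rightarrow>\<^sub>E {1..k}"
        proof (rule PiE_I)
          fix v assume "v \<in> V" then show "\<psi> v \<in> {1..k}" using pe ps by auto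
        next
          fix v assume "v \<notin> V" then have "Some v \<notin> insert None (Some ` V)" by auto
          then show "\<psi> v = undefined" using pe ps by (simp add: PiE_def extensional_def)
        qed
        moreover have "\<forall>e\<in>E. \<exists>v\<in>e. \<psi> v \<noteq> c" using pc p ps by auto
        ultimately show "\<psi> \<in> T c" unfolding T_def by blast
      qed
      show "(\<lambda>\<psi> x. case x of None \<Rightarrow> c | Some v \<Rightarrow> \<psi> v) ` T c \<subseteq> {\<phi> \<in> W. \<phi> None = c}"
        proof
        fix \<phi> assume "\<phi> \<in> (\<lambda>\<psi> x. case x of None \<Rightarrow> c | Some v \<Rightarrow> \<psi> v) ` T c"
        then obtain \<psi> where ps: "\<psi> \<in> T c" and pd: "\<phi> = (\<lambda>x. case x of None \<Rightarrow> c | Some v \<Rightarrow> \<psi> v)" by blast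
        from ps have pe: "\<psi> \<in> V \<rightarrow>\<^sub>E {1..k}" and pc: "\<forall>e\<in>E. \<exists>v\<in>e. \<psi> v \<noteq> c"
          unfolding T_def by auto
        have "\<phi> \<in> insert None (Some ` V) \<rightarrow>\<^sub>E {1..k}"
        proof (rule PiE_I)
          fix x assume "x \<in> insert None (Some ` V)" then show "\<phi> x \<in> {1..k}" using pe pd c by auto
        next
          fix x assume x: "x \<notin> insert None (Some ` V)"
          then obtain v where "x = Some v" "v \<notin> V" by (cases x) auto
          then show "\<phi> x = undefined" using pe pd by (simp add: PiE_def extensional_def)
        qed
        moreover have "\<forall>e\<in>E. \<exists>v\<in>e. \<phi> (Some v) \<noteq> \<phi> None" using pc pd by auto
        ultimately show "\<phi> \<in> {\<phi> \<in> W. \<phi> None = c}" using memW pd by auto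
      qed
    qed
    then show "card {\<phi>\<in>W. \<phi> None = c} = card (T c)" by (rule bij_betw_same_card)
  qed
  finally show ?thesis unfolding num_colourings_def W_def T_def .
qed


lemma card_fixed:
  assumes "A \<subseteq> V" "finite V" "c \<in> S" "finite S"
  shows "card {\<psi> \<in> V \<rightarrow>\<^sub>E S. {v\<in>V. \<psi> v = c} = A} = (card S - 1) ^ (card V - card A)"
proof -
  have "bij_betw (\<lambda>\<psi>. restrict \<psi> (V - A)) {\<psi> \<in> V \<rightarrow>\<^sub>E S. {v\<in>V. \<psi> v = c} = A} ((V - A) \<rightarrow>\<^sub>E (S - {c}))"
  proof (rule bij_betw_byWitness[where f'="\<lambda>\<chi> v. if v \<in> A then c else \<chi> v"])
    show "\<forall>a\<in>{\<psi> \<in> V \<rightarrow>\<^sub>E S. {v\<in>V. \<psi> v = c} = A}. (\<lambda>v. if v \<in> A then c else restrict a (V - A) v) = a"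
    proof
      fix a assume a: "a \<in> {\<psi> \<in> V \<rightarrow>\<^sub>E S. {v\<in>V. \<psi> v = c} = A}"
      show "(\<lambda>v. if v \<in> A then c else restrict a (V - A) v) = a"
      proof
        fix v show "(if v \<in> A then c else restrict a (V - A) v) = a v"
          using a by (cases "v \<in> V") (auto simp: PiE_def extensional_def)
      qed
    qed
    show "\<forall>a'\<in>(V - A) \<rightarrow>\<^sub>E (S - {c}). restrict (\<lambda>v. if v \<in> A then c else a' v) (V - A) = a'"
    proof
      fix a' assume a': "a' \<in> (V - A) \<rightarrow>\<^sub>E (S - {c})"
      show "restrict (\<lambda>v. if v \<in> A then c else a' v) (V - A) = a'"
      proof
        fix v show "restrict (\<lambda>v. if v \<in> A then c else a' v) (V - A) v = a' v"
          using a' by (cases "v \<in> V - A") (auto simp: PiE_def extensional_def)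
      qed
    qed
    show "(\<lambda>\<psi>. restrict \<psi> (V - A)) ` {\<psi> \<in> V \<rightarrow>\<^sub>E S. {v\<in>V. \<psi> v = c} = A} \<subseteq> (V - A) \<rightarrow>\<^sub>E (S - {c})"
      by (auto simp: PiE_def Pi_def)
    show "(\<lambda>\<chi> v. if v \<in> A then c else \<chi> v) ` ((V - A) \<rightarrow>\<^sub>E (S - {c})) \<subseteq> {\<psi> \<in> V \<rightarrow>\<^sub>E S. {v\<in>V. \<psi> v = c} = A}"
      using assms(1,3) by (auto simp: PiE_def Pi_def extensional_def split: if_splits)
  qed
  then have "card {\<psi> \<in> V \<rightarrow>\<^sub>E S. {v\<in>V. \<psi> v = c} = A} = card ((V - A) \<rightarrow>\<^sub>E (S - {c}))"
    by (rule bij_betw_same_card)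
  also have "\<dots> = card (S - {c}) ^ card (V - A)"
    using assms by (simp add: card_PiE)
  also have "\<dots> = (card S - 1) ^ (card V - card A)"
    using assms by (simp add: card_Diff_subset finite_subset)
  finally show ?thesis .
qed

lemma step2:
  assumes sg: "simple_graph V E" and c: "c \<in> S" and fS: "finite S"
  shows "card {\<psi> \<in> V \<rightarrow>\<^sub>E S. \<forall>e\<in>E. \<exists>v\<in>e. \<psi> v \<noteq> c}
     = (\<Sum>A\<in>independent_sets V E. (card S - 1) ^ (card V - card A))"
proof -
  have fV: "finite V" using sg by (simp add: simple_graph_def)
  have Esub: "\<And>e. e \<in> E \<Longrightarrow> e \<subseteq> V" using sg by (simp add: simple_graph_def)
  have E2: "\<And>e. e \<in> E \<Longrightarrow> \<exists>u v. e = {u, v}"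
    using sg unfolding simple_graph_def by (metis card_2_iff)
  define B where "B A = {\<psi> \<in> V \<rightarrow>\<^sub>E S. {v\<in>V. \<psi> v = c} = A}" for A
  have finI: "finite (independent_sets V E)"
    by (rule finite_subset[of _ "Pow V"]) (use fV in \<open>auto simp: independent_sets_def\<close>)
  have eq: "{\<psi> \<in> V \<rightarrow>\<^sub>E S. \<forall>e\<in>E. \<exists>v\<in>e. \<psi> v \<noteq> c} = (\<Union>A\<in>independent_sets V E. B A)"
  proof (rule set_eqI iffI)+
    fix \<psi> assume h: "\<psi> \<in> {\<psi> \<in> V \<rightarrow>\<^sub>E S. \<forall>e\<in>E. \<exists>v\<in>e. \<psi> v \<noteq> c}"
    have "{v\<in>V. \<psi> v = c} \<in> independent_sets V E"
      unfolding independent_sets_def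
    proof (intro CollectI conjI ballI)
      fix u v assume "u \<in> {v\<in>V. \<psi> v = c}" "v \<in> {v\<in>V. \<psi> v = c}"
      then show "{u, v} \<notin> E" using h by auto
    qed auto
    then show "\<psi> \<in> (\<Union>A\<in>independent_sets V E. B A)" using h unfolding B_def by auto
  next
    fix \<psi> assume "\<psi> \<in> (\<Union>A\<in>independent_sets V E. B A)"
    then obtain A where A: "A \<in> independent_sets V E" "\<psi> \<in> V \<rightarrow>\<^sub>E S" "{v\<in>V. \<psi> v = c} = A"
      unfolding B_def by auto
    have "\<forall>e\<in>E. \<exists>v\<in>e. \<psi> v \<noteq> c"
    proof
      fix e assume e: "e \<in> E"
      then obtain u v where uv: "e = {u, v}" using E2 by blast
      have "u \<in> V" "v \<in> V" using Esub[OF e] uv by auto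
      show "\<exists>v\<in>e. \<psi> v \<noteq> c"
      proof (rule ccontr)
        assume "\<not> ?thesis"
        then have "u \<in> A" "v \<in> A" using uv A(3) \<open>u \<in> V\<close> \<open>v \<in> V\<close> by auto
        then have "{u, v} \<notin> E" using A(1) unfolding independent_sets_def by auto
        with e uv show False by simp
      qed
    qed
    then show "\<psi> \<in> {\<psi> \<in> V \<rightarrow>\<^sub>E S. \<forall>e\<in>E. \<exists>v\<in>e. \<psi> v \<noteq> c}" using A by auto
  qed
  have "card (\<Union>A\<in>independent_sets V E. B A) = (\<Sum>A\<in>independent_sets V E. card (B A))"
  proof (rule card_UN_disjoint[OF finI])
    show "\<forall>A\<in>independent_sets V E. finite (B A)"
      unfolding B_def using fV fS by (auto intro: finite_subset[OF _ finite_PiE[of V "\<lambda>_. S"]])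
    show "\<forall>i\<in>independent_sets V E. \<forall>j\<in>independent_sets V E. i \<noteq> j \<longrightarrow> B i \<inter> B j = {}"
      unfolding B_def by blast
  qed
  also have "\<dots> = (\<Sum>A\<in>independent_sets V E. (card S - 1) ^ (card V - card A))"
    unfolding B_def
    by (rule sum.cong[OF refl], rule card_fixed) (use fV c fS in \<open>auto simp: independent_sets_def\<close>)
  finally show ?thesis using eq by simp
qed


lemma count:
  assumes sg: "simple_graph V E"
  shows "num_colourings (cone_hypergraph V E) k =
    k * (\<Sum>A\<in>independent_sets V E. (k - 1) ^ (card V - card A))"
proof -
  have "num_colourings (cone_hypergraph V E) k =
    (\<Sum>c\<in>{1..k}. (\<Sum>A\<in>independent_sets V E. (card {1..k} - 1) ^ (card V - card A)))"
    unfolding step1[OF sg] by (rule sum.cong[OF refl], rule step2[OF sg]) auto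
  then show ?thesis by simp
qed

lemma poly_unique:
  fixes p q :: "complex poly"
  assumes "\<forall>k::nat. poly p (of_nat k) = poly q (of_nat k)"
  shows "p = q"
proof (rule ccontr)
  assume "p \<noteq> q"
  then have "p - q \<noteq> 0" by simp
  then have "finite {x. poly (p - q) x = 0}" by (rule poly_roots_finite)
  moreover have "range (of_nat :: nat \<Rightarrow> complex) \<subseteq> {x. poly (p - q) x = 0}"
    using assms by auto
  moreover have "infinite (range (of_nat :: nat \<Rightarrow> complex))"
    using range_inj_infinite[of "of_nat :: nat \<Rightarrow> complex"] by (simp add: inj_on_def)
  ultimately show False using finite_subset by blast
qed

lemma chrom_eq:
  assumes sg: "simple_graph V E"
  shows "chrom_poly (cone_hypergraph V E) =
    [:0, 1:] * (\<Sum>A\<in>independent_sets V E. [:-1, 1:] ^ (card V - card A))"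
    (is "_ = ?p")
proof -
  have val: "poly ?p (of_nat k) = of_nat (num_colourings (cone_hypergraph V E) k)" for k
  proof (cases "k = 0")
    case True then show ?thesis by (simp add: count[OF sg])
  next
    case False
    then have "(of_nat (k - 1) :: complex) = of_nat k - 1" by (simp add: of_nat_diff)
    then show ?thesis by (simp add: count[OF sg] poly_sum)
  qed
  show ?thesis unfolding chrom_poly_def
  proof (rule the_equality)
    show "\<forall>k. poly ?p (of_nat k) = of_nat (num_colourings (cone_hypergraph V E) k)" using val by blast
    fix q :: "complex poly" assume "\<forall>k::nat. poly q (of_nat k) = of_nat (num_colourings (cone_hypergraph V E) k)"
    then show "q = ?p" using val by (intro poly_unique) simp
  qed
qed

theorem theorem1:
  fixes V :: "'a set" and E :: "'a set set" and n :: nat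
  assumes "simple_graph V E" and "card V = n"
  shows "\<forall>z::complex. z \<noteq> 1 \<longrightarrow>
           poly (chrom_poly (cone_hypergraph V E)) z
             = z * (z - 1) ^ n * indep_poly V E (1 / (z - 1))"
proof (intro allI impI)
  fix z :: complex assume z: "z \<noteq> 1"
  have fV: "finite V" using assms by (simp add: simple_graph_def)
  have "poly (chrom_poly (cone_hypergraph V E)) z = z * (\<Sum>A\<in>independent_sets V E. (z - 1) ^ (n - card A))"
    by (simp add: chrom_eq[OF assms(1)] poly_sum assms(2))
  also have "\<dots> = z * ((z - 1) ^ n * (\<Sum>A\<in>independent_sets V E. (1 / (z - 1)) ^ card A))"
    unfolding sum_distrib_left
  proof (intro arg_cong[where f="\<lambda>x. z * x"] sum.cong refl)
    fix A assume "A \<in> independent_sets V E"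
    then have "card A \<le> n" using fV assms(2) by (auto simp: independent_sets_def intro: card_mono)
    moreover have "z - 1 \<noteq> 0" using z by simp
    ultimately show "(z - 1) ^ (n - card A) = (z - 1) ^ n * (1 / (z - 1)) ^ card A"
      by (simp add: power_diff power_one_over divide_inverse power_inverse)
  qed
  finally show "poly (chrom_poly (cone_hypergraph V E)) z = z * (z - 1) ^ n * indep_poly V E (1 / (z - 1))"
    by (simp add: indep_poly_def mult.assoc)
qed

end
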